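(* Consider instances of the Stable Matching Problem with Couples (SMP-C) that possess a resident optimal matching, and let $y$ be the mechanism that maps each such instance (given by the stated ROLs) to its resident optimal matching. Then: (1) (Truncation-proofness.) Let $\mathcal{I}$ be an SMP-C instance with resident optimal matching $\mu^*$, where all ROLs are the participants' true preferences. Let $a$ be a single doctor or a couple, and let $\mathcal{I}'$ be the instance obtained from $\mathcal{I}$ by replacing $a$'s ROL with a truncation of it, all other ROLs unchanged. If $\mathcal{I}'$ has a resident optimal matching $\mu'$, then it is not the case that $\mu'(a) \succ_a \mu^*(a)$, where $\succ_a$ is $a$'s true (original) preference. That is, $y$ is strategy-proof for residents when residents may only misreport via truncation. (2) (Reordering can be profitable.) $y$ is not in general strategy-proof when residents may misreport via reordering: there exists an SMP-C instance $\mathcal{I}$ (with true preferences) that has a unique stable matching $\mu^*$ (hence $\mu^*$ is resident optimal), a single doctor $d$, and a reordering of $d$'s ROL (a permutation of the same acceptable programs), all other ROLs unchanged, such that the resulting instance $\mathcal{I}'$ has a resident optimal matching $\mu'$ with $\mu'(d) \succ_d \mu^*(d)$ according to $d$'s true preferences.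
   Context: An SMP-C instance consists of a finite set $D$ of doctors, a finite set $P$ of programs, and a special element $\mathit{nil}$; write $D^+=D\cup\{\mathit{nil}\}$, $P^+=P\cup\{\mathit{nil}\}$. $D$ is partitioned into singles $S$ and coupled doctors $D\setminus S$; the couples form a set $C\subseteq (D\setminus S)\times(D\setminus S)$ of pairs such that every coupled doctor belongs to exactly one pair. Each program $p$ has a quota $q_p\ge 1$. Each participant gives a ranked order list (ROL), a strictly ordered list terminated by $\mathit{nil}$: singles rank elements of $P$, couples rank pairs in $P^+\times P^+$ (terminated by $(\mathit{nil},\mathit{nil})$), programs rank doctors. For a participant $a$, $x \succeq_a y$ means $x$ appears no later than $y$ on $a$'s ROL (or $x=y$); $x$ is acceptable to $a$ if $x\succeq_a \mathit{nil}$; alternatives not on the ROL are unacceptable. For a program $p$ and set $R$ of doctors, $\mathrm{ch}_p(R)$ is the maximal subset of $R$ consisting of acceptable doctors, of size at most $q_p$, such that every chosen doctor is ranked by $p$ above every unchosen doctor of $R$; $\mathrm{ch}_{\mathit{nil}}(R)=R$. A matching $\mu$ maps $D\to P^+$; $\mu^{-1}(p)$ is the set of doctors matched to $p$; for a couple $c=(d_1,d_2)$, $\mu(c)=(\mu(d_1),\mu(d_2))$. Let $\mathit{willAccept}(p,R,\mu)$ mean $R\subseteq \mathrm{ch}_p(\mu^{-1}(p)\cup R)$. Blocking pairs: (i) a single $d$ and $p\in P$ with $p\succ_d\mu(d)$ and $\mathit{willAccept}(p,\{d\},\mu)$; (ii) a couple $c=(d_1,d_2)$ and $(p_1,p_2)\in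 P^+\times P^+$ with $p_1\ne p_2$, $(p_1,p_2)\succ_c\mu(c)$, $\mathit{willAccept}(p_1,\{d_1\},\mu)$ and $\mathit{willAccept}(p_2,\{d_2\},\mu)$; (iii) a couple $c=(d_1,d_2)$ and $p\in P$ with $(p,p)\succ_c \mu(c)$ and $\mathit{willAccept}(p,\{d_1,d_2\},\mu)$. $\mu$ is individually rational if every single gets an acceptable program (or $\mathit{nil}$), every couple gets an acceptable pair (or $(\mathit{nil},\mathit{nil})$), and every program $p$ has $|\mu^{-1}(p)|\le q_p$ with all its matched doctors acceptable to it. $\mu$ is stable if it is individually rational and has no blocking pair. For matchings $\mu_1,\mu_2$, write $\mu_1\succeq_R\mu_2$ if $\mu_1(a)\succeq_a\mu_2(a)$ for every single and every couple $a$. A matching $\mu$ is resident optimal if it is stable and $\mu\succeq_R\mu'$ for every stable matching $\mu'$. A truncation of $a$'s ROL keeps an initial segment of the ROL (then terminated by $\mathit{nil}$, resp. $(\mathit{nil},\mathit{nil})$), making all later entries unacceptable. A reordering of $a$'s ROL lists the same acceptable alternatives in a different order. *)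

theory Defs
  imports Main
begin

text \<open>nil is represented by None. A ROL is stored as the list of its entries
  before the terminating nil; the full ROL is l @ [nil].\<close>

record ('d, 'p) smpc =
  Docs    :: "'d set"
  Progs   :: "'p set"
  Singles :: "'d set"
  Couples :: "('d \<times> 'd) set"
  quota   :: "'p \<Rightarrow> nat"
  srol    :: "'d \<Rightarrow> 'p option list"
  crol    :: "'d \<times> 'd \<Rightarrow> ('p option \<times> 'p option) list"
  prol    :: "'p \<Rightarrow> 'd option list"

definition prefers :: "'a list \<Rightarrow> 'a \<Rightarrow> 'a \<Rightarrow> 'a \<Rightarrow> bool" where
  "prefers l t x y \<longleftrightarrow>
     (let L = l @ [t] in
       x \<in> set L \<and> (y \<notin> set L \<or> (\<exists>i j. i < j \<and> j < length L \<and> L ! i = x \<and> L ! j = y)))"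

definition weakpref :: "'a list \<Rightarrow> 'a \<Rightarrow> 'a \<Rightarrow> 'a \<Rightarrow> bool" where
  "weakpref l t x y \<longleftrightarrow> x = y \<or> prefers l t x y"

definition wf_smpc :: "('d, 'p) smpc \<Rightarrow> bool" where
  "wf_smpc I \<longleftrightarrow>
     finite (Docs I) \<and> finite (Progs I) \<and>
     Singles I \<subseteq> Docs I \<and>
     Couples I \<subseteq> (Docs I - Singles I) \<times> (Docs I - Singles I) \<and>
     (\<forall>c \<in> Couples I. fst c \<noteq> snd c) \<and>
     (\<forall>d \<in> Docs I - Singles I. \<exists>!c. c \<in> Couples I \<and> (fst c = d \<or> snd c = d)) \<and>
     (\<forall>p \<in> Progs I. quota I p \<ge> 1) \<and>
     (\<forall>d \<in> Singles I. distinct (srol I d) \<and> set (srol I d) \<subseteq> Some ` Progs I) \<and>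
     (\<forall>c \<in> Couples I. distinct (crol I c) \<and> (None, None) \<notin> set (crol I c) \<and>
        set (crol I c) \<subseteq> (insert None (Some ` Progs I)) \<times> (insert None (Some ` Progs I))) \<and>
     (\<forall>p \<in> Progs I. distinct (prol I p) \<and> set (prol I p) \<subseteq> Some ` Docs I)"

definition prog_acceptable :: "('d, 'p) smpc \<Rightarrow> 'p \<Rightarrow> 'd \<Rightarrow> bool" where
  "prog_acceptable I p d \<longleftrightarrow> weakpref (prol I p) None (Some d) None"

definition choice_ok :: "('d, 'p) smpc \<Rightarrow> 'p \<Rightarrow> 'd set \<Rightarrow> 'd set \<Rightarrow> bool" where
  "choice_ok I p R X \<longleftrightarrow> X \<subseteq> R \<and> (\<forall>d \<in> X. prog_acceptable I p d) \<and>
     card X \<le> quota I p \<and>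
     (\<forall>d \<in> X. \<forall>d' \<in> R - X. prefers (prol I p) None (Some d) (Some d'))"

definition ch :: "('d, 'p) smpc \<Rightarrow> 'p \<Rightarrow> 'd set \<Rightarrow> 'd set" where
  "ch I p R = (THE X. choice_ok I p R X \<and> \<not> (\<exists>Y. choice_ok I p R Y \<and> X \<subset> Y))"

definition is_matching :: "('d, 'p) smpc \<Rightarrow> ('d \<Rightarrow> 'p option) \<Rightarrow> bool" where
  "is_matching I \<mu> \<longleftrightarrow> (\<forall>d. (d \<in> Docs I \<longrightarrow> \<mu> d \<in> insert None (Some ` Progs I)) \<and>
                              (d \<notin> Docs I \<longrightarrow> \<mu> d = None))"

definition assigned :: "('d, 'p) smpc \<Rightarrow> ('d \<Rightarrow> 'p option) \<Rightarrow> 'p \<Rightarrow> 'd set" where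
  "assigned I \<mu> p = {d \<in> Docs I. \<mu> d = Some p}"

definition will_accept :: "('d, 'p) smpc \<Rightarrow> 'p option \<Rightarrow> 'd set \<Rightarrow> ('d \<Rightarrow> 'p option) \<Rightarrow> bool" where
  "will_accept I p R \<mu> = (case p of None \<Rightarrow> True
      | Some q \<Rightarrow> R \<subseteq> ch I q (assigned I \<mu> q \<union> R))"

definition couple_match :: "('d \<Rightarrow> 'p option) \<Rightarrow> 'd \<times> 'd \<Rightarrow> 'p option \<times> 'p option" where
  "couple_match \<mu> c = (\<mu> (fst c), \<mu> (snd c))"

definition indiv_rational :: "('d, 'p) smpc \<Rightarrow> ('d \<Rightarrow> 'p option) \<Rightarrow> bool" where
  "indiv_rational I \<mu> \<longleftrightarrow>
     (\<forall>d \<in> Singles I. weakpref (srol I d) None (\<mu> d) None) \<and>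
     (\<forall>c \<in> Couples I. weakpref (crol I c) (None, None) (couple_match \<mu> c) (None, None)) \<and>
     (\<forall>p \<in> Progs I. card (assigned I \<mu> p) \<le> quota I p \<and>
        (\<forall>d \<in> assigned I \<mu> p. prog_acceptable I p d))"

definition has_blocking_pair :: "('d, 'p) smpc \<Rightarrow> ('d \<Rightarrow> 'p option) \<Rightarrow> bool" where
  "has_blocking_pair I \<mu> \<longleftrightarrow>
     (\<exists>d \<in> Singles I. \<exists>p \<in> Progs I.
        prefers (srol I d) None (Some p) (\<mu> d) \<and> will_accept I (Some p) {d} \<mu>) \<or>
     (\<exists>c \<in> Couples I. \<exists>p1 \<in> insert None (Some ` Progs I). \<exists>p2 \<in> insert None (Some ` Progs I).
        p1 \<noteq> p2 \<and> prefers (crol I c) (None, None) (p1, p2) (couple_match \<mu> c) \<and>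
        will_accept I p1 {fst c} \<mu> \<and> will_accept I p2 {snd c} \<mu>) \<or>
     (\<exists>c \<in> Couples I. \<exists>p \<in> Progs I.
        prefers (crol I c) (None, None) (Some p, Some p) (couple_match \<mu> c) \<and>
        will_accept I (Some p) {fst c, snd c} \<mu>)"

definition stable :: "('d, 'p) smpc \<Rightarrow> ('d \<Rightarrow> 'p option) \<Rightarrow> bool" where
  "stable I \<mu> \<longleftrightarrow> is_matching I \<mu> \<and> indiv_rational I \<mu> \<and> \<not> has_blocking_pair I \<mu>"

definition resident_weakly_better :: "('d, 'p) smpc \<Rightarrow> ('d \<Rightarrow> 'p option) \<Rightarrow> ('d \<Rightarrow> 'p option) \<Rightarrow> bool" where
  "resident_weakly_better I \<mu>1 \<mu>2 \<longleftrightarrow>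
     (\<forall>d \<in> Singles I. weakpref (srol I d) None (\<mu>1 d) (\<mu>2 d)) \<and>
     (\<forall>c \<in> Couples I. weakpref (crol I c) (None, None) (couple_match \<mu>1 c) (couple_match \<mu>2 c))"

definition resident_optimal :: "('d, 'p) smpc \<Rightarrow> ('d \<Rightarrow> 'p option) \<Rightarrow> bool" where
  "resident_optimal I \<mu> \<longleftrightarrow> stable I \<mu> \<and> (\<forall>\<mu>'. stable I \<mu>' \<longrightarrow> resident_weakly_better I \<mu> \<mu>')"

end

theory Submission
  imports Defs
begin

definition before :: "'a list \<Rightarrow> 'a \<Rightarrow> 'a \<Rightarrow> bool" where
  "before L x y \<longleftrightarrow> (\<exists>i j. i < j \<and> j < length L \<and> L ! i = x \<and> L ! j = y)"

lemma before_Nil[simp]: "\<not> before [] x y" by (simp add: before_def)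

lemma before_Cons[simp]: "before (a # L) x y \<longleftrightarrow> (a = x \<and> y \<in> set L) \<or> before L x y"
proof
  assume "before (a # L) x y"
  then obtain i j where h: "i < j" "j < length (a#L)" "(a#L) ! i = x" "(a#L) ! j = y"
    unfolding before_def by blast
  show "(a = x \<and> y \<in> set L) \<or> before L x y"
  proof (cases i)
    case 0
    then obtain j' where "j = Suc j'" using h by (cases j) auto
    then show ?thesis using h 0 by (auto simp: in_set_conv_nth)
  next
    case (Suc i')
    then obtain j' where "j = Suc j'" using h by (cases j) auto
    then show ?thesis using h Suc unfolding before_def by auto
  qed
next
  assume "(a = x \<and> y \<in> set L) \<or> before L x y"
  then show "before (a # L) x y"
  proof
    assume "a = x \<and> y \<in> set L"
    then obtain j where "j < length L" "L ! j = y" by (auto simp: in_set_conv_nth)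
    then show ?thesis using \<open>a = x \<and> y \<in> set L\<close> unfolding before_def
      by (intro exI[of _ 0] exI[of _ "Suc j"]) auto
  next
    assume "before L x y"
    then obtain i j where "i < j" "j < length L" "L ! i = x" "L ! j = y"
      unfolding before_def by blast
    then show ?thesis unfolding before_def
      by (intro exI[of _ "Suc i"] exI[of _ "Suc j"]) auto
  qed
qed

lemma prefers_before: "prefers l t x y \<longleftrightarrow> x \<in> set (l @ [t]) \<and> (y \<notin> set (l @ [t]) \<or> before (l @ [t]) x y)"
  unfolding prefers_def before_def Let_def by simp

lemma before_distinct: "distinct L \<Longrightarrow> before L x y \<Longrightarrow> before L y x \<Longrightarrow> False"
  unfolding before_def by (metis distinct_conv_nth order.strict_trans order_less_irrefl)

lemma before_irrefl: "distinct L \<Longrightarrow> before L x x \<Longrightarrow> False"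
  unfolding before_def by (metis distinct_conv_nth order.strict_trans order_less_irrefl)

lemma prefers_asym: "distinct (l @ [t]) \<Longrightarrow> prefers l t x y \<Longrightarrow> prefers l t y x \<Longrightarrow> False"
  unfolding prefers_before using before_distinct by metis

lemma prefers_irrefl: "distinct (l @ [t]) \<Longrightarrow> prefers l t x x \<Longrightarrow> False"
  unfolding prefers_before using before_irrefl by metis

lemma weak_prefers: "distinct (l @ [t]) \<Longrightarrow> weakpref l t x y \<Longrightarrow> prefers l t y x \<Longrightarrow> False"
  unfolding weakpref_def using prefers_asym prefers_irrefl by metis

lemma mem_prefers_t: "x \<in> set l \<Longrightarrow> prefers l t x t"
proof -
  assume "x \<in> set l"
  then obtain i where i: "i < length l" "l ! i = x" by (auto simp: in_set_conv_nth)
  have "\<exists>i j. i < j \<and> j < length (l@[t]) \<and> (l@[t]) ! i = x \<and> (l@[t]) ! j = t"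
    using i by (intro exI[of _ i] exI[of _ "length l"]) (auto simp: nth_append)
  then show ?thesis unfolding prefers_def Let_def using \<open>x \<in> set l\<close> by auto
qed

lemma weak_t_mem: "weakpref l t x t \<Longrightarrow> x \<noteq> t \<Longrightarrow> x \<in> set l"
  unfolding weakpref_def prefers_def Let_def by auto

lemma prefers_take:
  assumes d: "distinct (l @ [t])" and x: "x \<in> set (take k l)" and p: "prefers l t y x"
  shows "prefers (take k l) t y x"
proof -
  have xl: "x \<in> set (l @ [t])" using x by (auto dest: in_set_takeD)
  from p xl obtain i j where ij: "i < j" "j < length (l@[t])" "(l@[t]) ! i = y" "(l@[t]) ! j = x"
    unfolding prefers_def Let_def by blast
  from x obtain j' where j': "j' < length (take k l)" "take k l ! j' = x" by (auto simp: in_set_conv_nth)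
  have "(l@[t]) ! j' = x" using j' by (auto simp: nth_append)
  moreover have "j' < length (l@[t])" using j' by auto
  ultimately have "j = j'" using ij d by (metis nth_eq_iff_index_eq)
  hence lt: "i < j'" "j' < length (take k l)" using ij j' by auto
  have "(take k l @ [t]) ! i = y" using lt ij by (auto simp: nth_append)
  moreover have "(take k l @ [t]) ! j' = x" using j' by (auto simp: nth_append)
  moreover have "y \<in> set (take k l @ [t])" using calculation lt
    by (metis length_append_singleton less_SucI nth_mem order.strict_trans)
  ultimately show ?thesis unfolding prefers_def Let_def using lt
    by (metis length_append_singleton less_SucI)
qed

lemma wa_srol[simp]: "will_accept (I\<lparr>srol := f\<rparr>) = will_accept I"
  by (intro ext) (simp add: will_accept_def ch_def choice_ok_def prog_acceptable_def assigned_def split: option.splits)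

lemma wa_crol[simp]: "will_accept (I\<lparr>crol := f\<rparr>) = will_accept I"
  by (intro ext) (simp add: will_accept_def ch_def choice_ok_def prog_acceptable_def assigned_def split: option.splits)

lemma assigned_srol[simp]: "assigned (I\<lparr>srol := f\<rparr>) = assigned I"
  by (intro ext) (simp add: assigned_def)
lemma assigned_crol[simp]: "assigned (I\<lparr>crol := f\<rparr>) = assigned I"
  by (intro ext) (simp add: assigned_def)
lemma pa_srol[simp]: "prog_acceptable (I\<lparr>srol := f\<rparr>) = prog_acceptable I"
  by (intro ext) (simp add: prog_acceptable_def)
lemma pa_crol[simp]: "prog_acceptable (I\<lparr>crol := f\<rparr>) = prog_acceptable I"
  by (intro ext) (simp add: prog_acceptable_def)

lemma part1:
  assumes wf: "wf_smpc I" and ro: "resident_optimal I \<mu>s" and dS: "d \<in> Singles I"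
    and ro': "resident_optimal (I\<lparr>srol := (srol I)(d := take k (srol I d))\<rparr>) \<mu>'"
  shows "\<not> prefers (srol I d) None (\<mu>' d) (\<mu>s d)"
proof
  assume pr: "prefers (srol I d) None (\<mu>' d) (\<mu>s d)"
  define l where "l = srol I d"
  define I' where "I' = I\<lparr>srol := (srol I)(d := take k l)\<rparr>"
  have dl: "distinct (l @ [None])" using wf dS unfolding wf_smpc_def l_def by auto
  have st: "stable I \<mu>s" using ro unfolding resident_optimal_def by auto
  have st': "stable I' \<mu>'" using ro' unfolding resident_optimal_def I'_def l_def by auto
  have irs: "weakpref l None (\<mu>s d) None"
    using st dS unfolding stable_def indiv_rational_def l_def by auto
  have "\<mu>' d \<noteq> None"
  proof
    assume "\<mu>' d = None"
    then show False using pr irs weak_prefers[OF dl] unfolding l_def by metis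
  qed
  moreover have "weakpref (take k l) None (\<mu>' d) None"
    using st' dS unfolding stable_def indiv_rational_def I'_def by auto
  ultimately have mt: "\<mu>' d \<in> set (take k l)" using weak_t_mem by metis
  hence ml: "\<mu>' d \<in> set l" by (auto dest: in_set_takeD)
  have "stable I \<mu>'"
  proof -
    have "is_matching I \<mu>'" using st' unfolding stable_def I'_def is_matching_def by simp
    moreover have "indiv_rational I \<mu>'"
      using st' ml mem_prefers_t[OF ml, of None] unfolding stable_def I'_def indiv_rational_def weakpref_def l_def
      by (auto split: if_splits)
    moreover have "\<not> has_blocking_pair I \<mu>'"
    proof -
      have nb: "\<not> has_blocking_pair I' \<mu>'" using st' unfolding stable_def by auto
      have key: "\<And>p. prefers l None (Some p) (\<mu>' d) \<Longrightarrow> prefers (take k l) None (Some p) (\<mu>' d)"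
        using prefers_take[OF dl mt] by blast
      show ?thesis using nb key unfolding has_blocking_pair_def I'_def l_def
        by (auto split: if_splits)
    qed
    ultimately show ?thesis unfolding stable_def by auto
  qed
  hence "weakpref l None (\<mu>s d) (\<mu>' d)"
    using ro dS unfolding resident_optimal_def resident_weakly_better_def l_def by auto
  then show False using weak_prefers[OF dl] pr unfolding l_def by metis
qed

lemma part2:
  assumes wf: "wf_smpc I" and ro: "resident_optimal I \<mu>s" and dS: "c \<in> Couples I"
    and ro': "resident_optimal (I\<lparr>crol := (crol I)(c := take k (crol I c))\<rparr>) \<mu>'"
  shows "\<not> prefers (crol I c) (None, None) (couple_match \<mu>' c) (couple_match \<mu>s c)"
proof
  assume pr: "prefers (crol I c) (None, None) (couple_match \<mu>' c) (couple_match \<mu>s c)"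
  define l where "l = crol I c"
  define I' where "I' = I\<lparr>crol := (crol I)(c := take k l)\<rparr>"
  have dl: "distinct (l @ [(None, None)])" using wf dS unfolding wf_smpc_def l_def by auto
  have st: "stable I \<mu>s" using ro unfolding resident_optimal_def by auto
  have st': "stable I' \<mu>'" using ro' unfolding resident_optimal_def I'_def l_def by auto
  have irs: "weakpref l (None, None) (couple_match \<mu>s c) (None, None)"
    using st dS unfolding stable_def indiv_rational_def l_def by auto
  have "couple_match \<mu>' c \<noteq> (None, None)"
  proof
    assume "couple_match \<mu>' c = (None, None)"
    then show False using pr irs weak_prefers[OF dl] unfolding l_def by metis
  qed
  moreover have "weakpref (take k l) (None, None) (couple_match \<mu>' c) (None, None)"
    using st' dS unfolding stable_def indiv_rational_def I'_def by auto
  ultimately have mt: "couple_match \<mu>' c \<in> set (take k l)" using weak_t_mem by metis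
  hence ml: "couple_match \<mu>' c \<in> set l" by (auto dest: in_set_takeD)
  have "stable I \<mu>'"
  proof -
    have "is_matching I \<mu>'" using st' unfolding stable_def I'_def is_matching_def by simp
    moreover have "indiv_rational I \<mu>'"
      using st' ml mem_prefers_t[OF ml, of "(None, None)"] unfolding stable_def I'_def indiv_rational_def weakpref_def l_def
      by (auto split: if_splits)
    moreover have "\<not> has_blocking_pair I \<mu>'"
    proof -
      have nb: "\<not> has_blocking_pair I' \<mu>'" using st' unfolding stable_def by auto
      have key: "\<And>p. prefers l (None, None) p (couple_match \<mu>' c) \<Longrightarrow> prefers (take k l) (None, None) p (couple_match \<mu>' c)"
        using prefers_take[OF dl mt] by blast
      have eq: "\<forall>c'\<in>Couples I. \<forall>x. prefers (crol I c') (None,None) x (couple_match \<mu>' c') \<longrightarrow> prefers (crol I' c') (None,None) x (couple_match \<mu>' c')"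
        using key unfolding I'_def l_def by auto
      have e2: "srol I' = srol I" "Couples I' = Couples I" "Singles I' = Singles I" "Progs I' = Progs I"
        "will_accept I' = will_accept I" unfolding I'_def by auto
      show ?thesis
      proof
        assume "has_blocking_pair I \<mu>'"
        then have "has_blocking_pair I' \<mu>'" unfolding has_blocking_pair_def e2 using eq by blast
        then show False using nb by blast
      qed
    qed
    ultimately show ?thesis unfolding stable_def by auto
  qed
  hence "weakpref l (None, None) (couple_match \<mu>s c) (couple_match \<mu>' c)"
    using ro dS unfolding resident_optimal_def resident_weakly_better_def l_def by auto
  then show False using weak_prefers[OF dl] pr unfolding l_def by metis
qed

lemma choice_chain:
  assumes d: "distinct (prol I p @ [None])" and X: "choice_ok I p R X" and Y: "choice_ok I p R Y"
  shows "X \<subseteq> Y \<or> Y \<subseteq> X"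
proof (rule ccontr)
  assume "\<not> (X \<subseteq> Y \<or> Y \<subseteq> X)"
  then obtain x y where "x \<in> X" "x \<notin> Y" "y \<in> Y" "y \<notin> X" by blast
  then have "prefers (prol I p) None (Some x) (Some y)" "prefers (prol I p) None (Some y) (Some x)"
    using X Y unfolding choice_ok_def by blast+
  then show False using prefers_asym[OF d] by blast
qed

lemma ch_spec:
  assumes fin: "finite R" and d: "distinct (prol I p @ [None])"
  shows "choice_ok I p R (ch I p R) \<and> (\<forall>Y. choice_ok I p R Y \<longrightarrow> Y \<subseteq> ch I p R)"
proof -
  define F where "F = {X. choice_ok I p R X}"
  have Fsub: "F \<subseteq> Pow R" unfolding F_def choice_ok_def by auto
  hence finF: "finite F" using fin finite_subset by blast
  have "{} \<in> F" unfolding F_def choice_ok_def by auto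
  hence ne: "F \<noteq> {}" by auto
  obtain X0 where X0: "X0 \<in> F" "\<forall>Y\<in>F. card Y \<le> card X0"
  proof -
    have "Max (card ` F) \<in> card ` F" using finF ne by (intro Max_in) auto
    then obtain X0 where "X0 \<in> F" "card X0 = Max (card ` F)" by auto
    moreover have "\<forall>Y\<in>F. card Y \<le> Max (card ` F)" using finF by auto
    ultimately show ?thesis using that by auto
  qed
  have all: "\<forall>Y. choice_ok I p R Y \<longrightarrow> Y \<subseteq> X0"
  proof (intro allI impI)
    fix Y assume Y: "choice_ok I p R Y"
    have "X0 \<subseteq> Y \<or> Y \<subseteq> X0" using choice_chain[OF d] Y X0(1) unfolding F_def by blast
    moreover have "finite Y" using Y fin unfolding choice_ok_def by (blast intro: finite_subset)
    moreover have "card Y \<le> card X0" using X0(2) Y unfolding F_def by blast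
    ultimately show "Y \<subseteq> X0" by (metis card_seteq)
  qed
  have c0: "choice_ok I p R X0" using X0 unfolding F_def by blast
  have "ch I p R = X0" unfolding ch_def
  proof (rule the_equality)
    show "choice_ok I p R X0 \<and> \<not> (\<exists>Y. choice_ok I p R Y \<and> X0 \<subset> Y)" using c0 all by blast
  next
    fix X assume "choice_ok I p R X \<and> \<not> (\<exists>Y. choice_ok I p R Y \<and> X \<subset> Y)"
    then show "X = X0" using all c0 by blast
  qed
  then show ?thesis using c0 all by simp
qed

lemma wa1:
  assumes q: "quota I p = 1" and d: "distinct (prol I p @ [None])" and fin: "finite (Docs I)"
  shows "will_accept I (Some p) {x} \<mu> \<longleftrightarrow> prog_acceptable I p x \<and>
     (\<forall>y\<in>assigned I \<mu> p - {x}. prefers (prol I p) None (Some x) (Some y))"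
proof -
  define R where "R = assigned I \<mu> p \<union> {x}"
  have fR: "finite R" unfolding R_def assigned_def using fin by auto
  note cs = ch_spec[OF fR d]
  show ?thesis
  proof
    assume "will_accept I (Some p) {x} \<mu>"
    hence xin: "x \<in> ch I p R" unfolding will_accept_def R_def by auto
    have co: "choice_ok I p R (ch I p R)" using cs by blast
    have fc: "finite (ch I p R)" using co fR unfolding choice_ok_def by (blast intro: finite_subset)
    have "card (ch I p R) \<le> 1" using co q unfolding choice_ok_def by auto
    hence "ch I p R = {x}" using xin fc by (auto simp: card_le_Suc0_iff_eq)
    then show "prog_acceptable I p x \<and> (\<forall>y\<in>assigned I \<mu> p - {x}. prefers (prol I p) None (Some x) (Some y))"
      using co unfolding choice_ok_def R_def by auto
  next
    assume h: "prog_acceptable I p x \<and> (\<forall>y\<in>assigned I \<mu> p - {x}. prefers (prol I p) None (Some x) (Some y))"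
    have "choice_ok I p R {x}" using h q unfolding choice_ok_def R_def by auto
    then show "will_accept I (Some p) {x} \<mu>" using cs unfolding will_accept_def R_def by auto
  qed
qed

lemma wa2:
  assumes q: "quota I p = 1" and d: "distinct (prol I p @ [None])" and fin: "finite (Docs I)"
    and ab: "a \<noteq> b"
  shows "\<not> will_accept I (Some p) {a, b} \<mu>"
proof
  assume w: "will_accept I (Some p) {a, b} \<mu>"
  define R where "R = assigned I \<mu> p \<union> {a, b}"
  have fR: "finite R" unfolding R_def assigned_def using fin by auto
  have co: "choice_ok I p R (ch I p R)" using ch_spec[OF fR d] by blast
  have fc: "finite (ch I p R)" using co fR unfolding choice_ok_def by (blast intro: finite_subset)
  have "{a,b} \<subseteq> ch I p R" using w unfolding will_accept_def R_def by auto
  hence "card {a,b} \<le> card (ch I p R)" using fc by (rule card_mono[rotated])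
  moreover have "card (ch I p R) \<le> 1" using co q unfolding choice_ok_def by auto
  ultimately show False using ab by simp
qed

definition I0 :: "(nat, nat) smpc" where
  "I0 = \<lparr>Docs = {0,1,2}, Progs = {0,1}, Singles = {0}, Couples = {(1,2)}, quota = (\<lambda>_. 1),
     srol = (\<lambda>d. if d = 0 then [Some 1, Some 0] else []),
     crol = (\<lambda>c. if c = (1,2) then [(Some 1, None), (Some 1, Some 0), (Some 0, Some 1)] else []),
     prol = (\<lambda>p. if p = 0 then [Some 2, Some 1, Some 0] else if p = 1 then [Some 2, Some 0, Some 1] else [])\<rparr>"

definition I1 :: "(nat, nat) smpc" where
  "I1 = I0\<lparr>srol := (srol I0)(0 := [Some 0, Some 1])\<rparr>"

definition F3 :: "nat option \<Rightarrow> nat option \<Rightarrow> nat option \<Rightarrow> nat \<Rightarrow> nat option" where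
  "F3 a b c = (\<lambda>d. if d = 0 then a else if d = 1 then b else if d = 2 then c else None)"

lemma I0_simps[simp]: "Docs I0 = {0,1,2}" "Progs I0 = {0,1}" "Singles I0 = {0}" "Couples I0 = {(1,2)}"
  "quota I0 p = 1" "srol I0 d = (if d = 0 then [Some 1, Some 0] else [])"
  "crol I0 c = (if c = (1,2) then [(Some 1, None), (Some 1, Some 0), (Some 0, Some 1)] else [])"
  "prol I0 p = (if p = 0 then [Some 2, Some 1, Some 0] else if p = 1 then [Some 2, Some 0, Some 1] else [])"
  by (simp_all add: I0_def)

lemma I1_simps[simp]: "Docs I1 = {0,1,2}" "Progs I1 = {0,1}" "Singles I1 = {0}" "Couples I1 = {(1,2)}"
  "quota I1 p = 1" "srol I1 d = (if d = 0 then [Some 0, Some 1] else [])"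
  "crol I1 c = (if c = (1,2) then [(Some 1, None), (Some 1, Some 0), (Some 0, Some 1)] else [])"
  "prol I1 p = (if p = 0 then [Some 2, Some 1, Some 0] else if p = 1 then [Some 2, Some 0, Some 1] else [])"
  by (simp_all add: I0_def I1_def)

lemma wa_None[simp]: "will_accept I None R \<mu>" by (simp add: will_accept_def)

lemma wa_I0: "p \<in> {0,1} \<Longrightarrow> will_accept I0 (Some p) {x} \<mu> \<longleftrightarrow> prog_acceptable I0 p x \<and>
     (\<forall>y\<in>assigned I0 \<mu> p - {x}. prefers (prol I0 p) None (Some x) (Some y))"
  by (rule wa1) auto
lemma wa_I1: "p \<in> {0,1} \<Longrightarrow> will_accept I1 (Some p) {x} \<mu> \<longleftrightarrow> prog_acceptable I1 p x \<and>
     (\<forall>y\<in>assigned I1 \<mu> p - {x}. prefers (prol I1 p) None (Some x) (Some y))"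
  by (rule wa1) auto
lemma wa2_I0: "p \<in> {0,1} \<Longrightarrow> a \<noteq> b \<Longrightarrow> \<not> will_accept I0 (Some p) {a,b} \<mu>"
  by (rule wa2) auto
lemma wa2_I1: "p \<in> {0,1} \<Longrightarrow> a \<noteq> b \<Longrightarrow> \<not> will_accept I1 (Some p) {a,b} \<mu>"
  by (rule wa2) auto

lemma assigned_F3_I0: "assigned I0 (F3 a b c) p = (if a = Some p then {0} else {}) \<union> (if b = Some p then {1} else {}) \<union> (if c = Some p then {2} else {})"
  by (auto simp: assigned_def F3_def)
lemma assigned_F3_I1: "assigned I1 (F3 a b c) p = (if a = Some p then {0} else {}) \<union> (if b = Some p then {1} else {}) \<union> (if c = Some p then {2} else {})"
  by (auto simp: assigned_def F3_def)

lemma matching_F3: "is_matching I \<mu> \<Longrightarrow> Docs I = {0,1,2} \<Longrightarrow> \<mu> = F3 (\<mu> 0) (\<mu> 1) (\<mu> 2)"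
  unfolding is_matching_def F3_def by (intro ext) auto

lemma stable_I0_F3: "stable I0 (F3 a b c) \<Longrightarrow> a \<in> {None, Some 0, Some 1} \<Longrightarrow> b \<in> {None, Some 0, Some 1}
   \<Longrightarrow> c \<in> {None, Some 0, Some 1} \<Longrightarrow> a = None \<and> b = Some 0 \<and> c = Some 1"
  apply (elim insertE; simp)
  apply (simp_all add: stable_def indiv_rational_def has_blocking_pair_def weakpref_def prefers_before couple_match_def
    prog_acceptable_def wa_I0 wa2_I0 assigned_F3_I0 is_matching_def)
  apply (simp_all add: F3_def)
  done
lemma stable_I1_F3: "stable I1 (F3 a b c) \<Longrightarrow> a \<in> {None, Some 0, Some 1} \<Longrightarrow> b \<in> {None, Some 0, Some 1}
   \<Longrightarrow> c \<in> {None, Some 0, Some 1} \<Longrightarrow> (a = None \<and> b = Some 0 \<and> c = Some 1) \<or> (a = Some 0 \<and> b = Some 1 \<and> c = None)"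
  apply (elim insertE; simp)
  apply (simp_all add: stable_def indiv_rational_def has_blocking_pair_def weakpref_def prefers_before couple_match_def
    prog_acceptable_def wa_I1 wa2_I1 assigned_F3_I1 is_matching_def)
  apply (simp_all add: F3_def)
  done

lemma stable_I0_ms: "stable I0 (F3 None (Some 0) (Some 1))"
  by (simp add: stable_def indiv_rational_def has_blocking_pair_def weakpref_def prefers_before couple_match_def
    prog_acceptable_def wa_I0 wa2_I0 assigned_F3_I0 is_matching_def) (simp_all add: F3_def)

lemma stable_I1_m': "stable I1 (F3 (Some 0) (Some 1) None)"
  by (simp add: stable_def indiv_rational_def has_blocking_pair_def weakpref_def prefers_before couple_match_def
    prog_acceptable_def wa_I1 wa2_I1 assigned_F3_I1 is_matching_def) (simp_all add: F3_def)

lemma vals: "is_matching I \<mu> \<Longrightarrow> Docs I = {0,1,2} \<Longrightarrow> Progs I = {0,1} \<Longrightarrow>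
   \<mu> 0 \<in> {None, Some 0, Some 1} \<and> \<mu> 1 \<in> {None, Some 0, Some 1} \<and> \<mu> 2 \<in> {None, Some 0, Some 1}"
  unfolding is_matching_def by auto

lemma part3: "\<exists>(I :: (nat, nat) smpc) \<mu>s d l' \<mu>'.
      wf_smpc I \<and> (\<exists>!\<mu>. stable I \<mu>) \<and> stable I \<mu>s \<and> d \<in> Singles I \<and>
      distinct l' \<and> set l' = set (srol I d) \<and>
      resident_optimal (I\<lparr>srol := (srol I)(d := l')\<rparr>) \<mu>' \<and>
      prefers (srol I d) None (\<mu>' d) (\<mu>s d)"
proof (intro exI conjI)
  show "wf_smpc I0" unfolding wf_smpc_def by auto
  show "\<exists>!\<mu>. stable I0 \<mu>"
  proof (rule ex1I[of _ "F3 None (Some 0) (Some 1)"])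
    show "stable I0 (F3 None (Some 0) (Some 1))" by (rule stable_I0_ms)
  next
    fix \<mu> assume st: "stable I0 \<mu>"
    hence m: "is_matching I0 \<mu>" unfolding stable_def by auto
    have eq: "\<mu> = F3 (\<mu> 0) (\<mu> 1) (\<mu> 2)" using matching_F3[OF m] by simp
    have v: "\<mu> 0 \<in> {None, Some 0, Some 1} \<and> \<mu> 1 \<in> {None, Some 0, Some 1} \<and> \<mu> 2 \<in> {None, Some 0, Some 1}"
      using vals[OF m] by simp
    have "\<mu> 0 = None \<and> \<mu> 1 = Some 0 \<and> \<mu> 2 = Some 1" using stable_I0_F3[of "\<mu> 0" "\<mu> 1" "\<mu> 2"] st eq v by metis
    then show "\<mu> = F3 None (Some 0) (Some 1)" using eq by simp
  qed
  show "stable I0 (F3 None (Some 0) (Some 1))" by (rule stable_I0_ms)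
  show "0 \<in> Singles I0" by simp
  show "distinct [Some (0::nat), Some 1]" by simp
  show "set [Some (0::nat), Some 1] = set (srol I0 0)" by auto
  have I1eq: "I0\<lparr>srol := (srol I0)(0 := [Some 0, Some 1])\<rparr> = I1" by (simp add: I1_def)
  show "resident_optimal (I0\<lparr>srol := (srol I0)(0 := [Some 0, Some 1])\<rparr>) (F3 (Some 0) (Some 1) None)"
    unfolding I1eq resident_optimal_def
  proof (intro conjI allI impI)
    show "stable I1 (F3 (Some 0) (Some 1) None)" by (rule stable_I1_m')
  next
    fix \<mu> assume st: "stable I1 \<mu>"
    hence m: "is_matching I1 \<mu>" unfolding stable_def by auto
    have eq: "\<mu> = F3 (\<mu> 0) (\<mu> 1) (\<mu> 2)" using matching_F3[OF m] by simp
    have v: "\<mu> 0 \<in> {None, Some 0, Some 1} \<and> \<mu> 1 \<in> {None, Some 0, Some 1} \<and> \<mu> 2 \<in> {None, Some 0, Some 1}"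
      using vals[OF m] by simp
    have "(\<mu> 0 = None \<and> \<mu> 1 = Some 0 \<and> \<mu> 2 = Some 1) \<or> (\<mu> 0 = Some 0 \<and> \<mu> 1 = Some 1 \<and> \<mu> 2 = None)"
      using stable_I1_F3[of "\<mu> 0" "\<mu> 1" "\<mu> 2"] st eq v by metis
    then have "\<mu> = F3 None (Some 0) (Some 1) \<or> \<mu> = F3 (Some 0) (Some 1) None" using eq by auto
    then show "resident_weakly_better I1 (F3 (Some 0) (Some 1) None) \<mu>"
      by (auto simp: resident_weakly_better_def weakpref_def prefers_before couple_match_def F3_def)
  qed
  show "prefers (srol I0 0) None (F3 (Some 0) (Some 1) None 0) (F3 None (Some 0) (Some 1) 0)"
    by (simp add: prefers_before F3_def)
qed

theorem theorem1:
  shows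
  "(\<forall>(I :: ('d, 'p) smpc) \<mu>s d k \<mu>'.
      wf_smpc I \<and> resident_optimal I \<mu>s \<and> d \<in> Singles I \<and>
      resident_optimal (I\<lparr>srol := (srol I)(d := take k (srol I d))\<rparr>) \<mu>'
      \<longrightarrow> \<not> prefers (srol I d) None (\<mu>' d) (\<mu>s d))
   \<and>
   (\<forall>(I :: ('d, 'p) smpc) \<mu>s c k \<mu>'.
      wf_smpc I \<and> resident_optimal I \<mu>s \<and> c \<in> Couples I \<and>
      resident_optimal (I\<lparr>crol := (crol I)(c := take k (crol I c))\<rparr>) \<mu>'
      \<longrightarrow> \<not> prefers (crol I c) (None, None) (couple_match \<mu>' c) (couple_match \<mu>s c))
   \<and>
   (\<exists>(I :: (nat, nat) smpc) \<mu>s d l' \<mu>'.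
      wf_smpc I \<and> (\<exists>!\<mu>. stable I \<mu>) \<and> stable I \<mu>s \<and> d \<in> Singles I \<and>
      distinct l' \<and> set l' = set (srol I d) \<and>
      resident_optimal (I\<lparr>srol := (srol I)(d := l')\<rparr>) \<mu>' \<and>
      prefers (srol I d) None (\<mu>' d) (\<mu>s d))"
  apply (intro conjI)
    apply (intro allI impI, elim conjE, rule part1, assumption+)
   apply (intro allI impI, elim conjE, rule part2, assumption+)
  apply (rule part3)
  done

end
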